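(* The group $\Gamma^{(2)} = \text{GU}_2(D)\cap U_2$ consists of the following set of matrices: \[\Gamma^{(2)} =\text{SU}_{2}(D)\cap g^{-1}\text{GL}_2(\mathcal{O})g.\]
   Context: $D$ is a definite quaternion algebra over $\mathbb{Q}$ ramified exactly at $\{p,\infty\}$ for a fixed prime $p$, with standard involution $x\mapsto\overline{x}$, and $\mathcal{O}$ is a fixed maximal order. $\text{GU}_2(D) = \{g\in M_2(D)\,|\,g\overline{g}^T = \mu(g)I,\ \mu(g)\in\mathbb{Q}^\times\}$ is the unitary similitude group, and $\text{SU}_2(D)$ denotes its elements with similitude $\mu=1$. Fix $g\in\text{GL}_2(D)$ such that the left $\mathcal{O}$-lattice $\mathcal{O}^2 g\subseteq D^2$ lies in the non-principal genus (i.e. its completion at $p$ is not locally equivalent to $\mathcal{O}_p^2$). Let $U_2 = \text{Stab}_{\text{GU}_2(D_{\mathbb{A}_f})}(\mathcal{O}^2 g)$ be the corresponding open compact subgroup of $\text{GU}_2(D_{\mathbb{A}_f})$, and $\Gamma^{(2)} = \text{GU}_2(D)\cap U_2$, i.e. $\Gamma^{(2)} = \text{Stab}_{\text{GU}_2(D)}(\mathcal{O}^2 g)$. *)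

theory Defs
  imports Complex_Main "HOL-Computational_Algebra.Primes"
begin

text \<open>Elements x0 + x1 i + x2 j + x3 k with i^2 = a, j^2 = b, k = ij = -ji.\<close>

datatype quat = Quat rat rat rat rat

fun qadd :: "quat \<Rightarrow> quat \<Rightarrow> quat" where
  "qadd (Quat x0 x1 x2 x3) (Quat y0 y1 y2 y3) = Quat (x0+y0) (x1+y1) (x2+y2) (x3+y3)"

fun qneg :: "quat \<Rightarrow> quat" where
  "qneg (Quat x0 x1 x2 x3) = Quat (-x0) (-x1) (-x2) (-x3)"

definition qsub :: "quat \<Rightarrow> quat \<Rightarrow> quat" where
  "qsub x y = qadd x (qneg y)"

fun qsmul :: "rat \<Rightarrow> quat \<Rightarrow> quat" where
  "qsmul c (Quat x0 x1 x2 x3) = Quat (c*x0) (c*x1) (c*x2) (c*x3)"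

fun qmul :: "int \<Rightarrow> int \<Rightarrow> quat \<Rightarrow> quat \<Rightarrow> quat" where
  "qmul a b (Quat x0 x1 x2 x3) (Quat y0 y1 y2 y3) =
     (let a' = (of_int a :: rat); b' = of_int b in
      Quat (x0*y0 + a'*x1*y1 + b'*x2*y2 - a'*b'*x3*y3)
           (x0*y1 + x1*y0 - b'*x2*y3 + b'*x3*y2)
           (x0*y2 + x2*y0 + a'*x1*y3 - a'*x3*y1)
           (x0*y3 + x3*y0 + x1*y2 - x2*y1))"

fun qconj :: "quat \<Rightarrow> quat" where
  "qconj (Quat x0 x1 x2 x3) = Quat x0 (-x1) (-x2) (-x3)"

definition qrat :: "rat \<Rightarrow> quat" where
  "qrat c = Quat c 0 0 0"

definition qzero :: quat where "qzero = qrat 0"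
definition qone :: quat where "qone = qrat 1"

text \<open>Ramified at infinity: D tensor R is a division algebra, i.e. the reduced norm
  form x0^2 - a x1^2 - b x2^2 + ab x3^2 is anisotropic over R.\<close>
definition ram_inf :: "int \<Rightarrow> int \<Rightarrow> bool" where
  "ram_inf a b \<longleftrightarrow> (\<forall>x0 x1 x2 x3 :: real. (x0, x1, x2, x3) \<noteq> (0, 0, 0, 0) \<longrightarrow>
      x0^2 - of_int a * x1^2 - of_int b * x2^2 + of_int a * of_int b * x3^2 \<noteq> 0)"

text \<open>l-adic Cauchy sequences of integers and l-adic null sequences (these model Z_l).\<close>
definition int_cauchy :: "int \<Rightarrow> (nat \<Rightarrow> int) \<Rightarrow> bool" where
  "int_cauchy l s \<longleftrightarrow> (\<forall>N. \<exists>n0. \<forall>m\<ge>n0. \<forall>n\<ge>n0. l ^ N dvd (s m - s n))"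

definition int_tendsto0 :: "int \<Rightarrow> (nat \<Rightarrow> int) \<Rightarrow> bool" where
  "int_tendsto0 l s \<longleftrightarrow> (\<forall>N. \<exists>n0. \<forall>n\<ge>n0. l ^ N dvd s n)"

text \<open>D splits at the prime l iff D tensor Q_l is not a division algebra, i.e. the
  reduced norm form has a nontrivial zero over Q_l, equivalently a primitive zero in
  Z_l^4; a point of Z_l^4 is given as the limit of an l-adic Cauchy sequence of integer
  vectors (primitive: not all coordinates divisible by l).\<close>
definition split_at :: "int \<Rightarrow> int \<Rightarrow> int \<Rightarrow> bool" where
  "split_at a b l \<longleftrightarrow> (\<exists>x0 x1 x2 x3 :: nat \<Rightarrow> int.
      int_cauchy l x0 \<and> int_cauchy l x1 \<and> int_cauchy l x2 \<and> int_cauchy l x3 \<and>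
      (\<forall>n. \<not> (l dvd x0 n \<and> l dvd x1 n \<and> l dvd x2 n \<and> l dvd x3 n)) \<and>
      int_tendsto0 l (\<lambda>n. (x0 n)^2 - a * (x1 n)^2 - b * (x2 n)^2 + a * b * (x3 n)^2))"

definition ram_at :: "int \<Rightarrow> int \<Rightarrow> int \<Rightarrow> bool" where
  "ram_at a b l \<longleftrightarrow> \<not> split_at a b l"

definition ramified_exactly_p_inf :: "int \<Rightarrow> int \<Rightarrow> int \<Rightarrow> bool" where
  "ramified_exactly_p_inf a b p \<longleftrightarrow> a \<noteq> 0 \<and> b \<noteq> 0 \<and> ram_inf a b \<and> ram_at a b p \<and>
      (\<forall>l. prime l \<and> l \<noteq> p \<longrightarrow> \<not> ram_at a b l)"

definition qlin4 :: "(nat \<Rightarrow> rat) \<Rightarrow> (nat \<Rightarrow> quat) \<Rightarrow> quat" where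
  "qlin4 c e = qadd (qadd (qsmul (c 0) (e 0)) (qsmul (c 1) (e 1)))
                    (qadd (qsmul (c 2) (e 2)) (qsmul (c 3) (e 3)))"

definition is_order :: "int \<Rightarrow> int \<Rightarrow> quat set \<Rightarrow> bool" where
  "is_order a b \<O> \<longleftrightarrow> qone \<in> \<O> \<and> (\<forall>x\<in>\<O>. \<forall>y\<in>\<O>. qmul a b x y \<in> \<O>) \<and>
     (\<exists>e :: nat \<Rightarrow> quat. \<O> = {qlin4 (\<lambda>i. of_int (n i)) e | n. True} \<and>
        (\<forall>c. qlin4 c e = qzero \<longrightarrow> (\<forall>i<4. c i = 0)))"

definition is_max_order :: "int \<Rightarrow> int \<Rightarrow> quat set \<Rightarrow> bool" where
  "is_max_order a b \<O> \<longleftrightarrow> is_order a b \<O> \<and> (\<forall>\<O>'. is_order a b \<O>' \<and> \<O> \<subseteq> \<O>' \<longrightarrow> \<O>' = \<O>)"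

text \<open>M2 m11 m12 m21 m22\<close>
datatype m2 = M2 quat quat quat quat

fun mmul :: "int \<Rightarrow> int \<Rightarrow> m2 \<Rightarrow> m2 \<Rightarrow> m2" where
  "mmul a b (M2 x11 x12 x21 x22) (M2 y11 y12 y21 y22) =
     M2 (qadd (qmul a b x11 y11) (qmul a b x12 y21)) (qadd (qmul a b x11 y12) (qmul a b x12 y22))
        (qadd (qmul a b x21 y11) (qmul a b x22 y21)) (qadd (qmul a b x21 y12) (qmul a b x22 y22))"

fun msub :: "m2 \<Rightarrow> m2 \<Rightarrow> m2" where
  "msub (M2 x11 x12 x21 x22) (M2 y11 y12 y21 y22) =
     M2 (qsub x11 y11) (qsub x12 y12) (qsub x21 y21) (qsub x22 y22)"

fun mstar :: "m2 \<Rightarrow> m2" where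
  "mstar (M2 x11 x12 x21 x22) = M2 (qconj x11) (qconj x21) (qconj x12) (qconj x22)"

definition mscal :: "rat \<Rightarrow> m2" where
  "mscal c = M2 (qrat c) qzero qzero (qrat c)"

definition mid :: m2 where "mid = mscal 1"

fun mentries :: "m2 \<Rightarrow> quat set" where
  "mentries (M2 x11 x12 x21 x22) = {x11, x12, x21, x22}"

definition in_GL2 :: "int \<Rightarrow> int \<Rightarrow> m2 \<Rightarrow> bool" where
  "in_GL2 a b g \<longleftrightarrow> (\<exists>h. mmul a b g h = mid \<and> mmul a b h g = mid)"

definition in_GL2O :: "int \<Rightarrow> int \<Rightarrow> quat set \<Rightarrow> m2 \<Rightarrow> bool" where
  "in_GL2O a b \<O> k \<longleftrightarrow> mentries k \<subseteq> \<O> \<and>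
     (\<exists>h. mentries h \<subseteq> \<O> \<and> mmul a b k h = mid \<and> mmul a b h k = mid)"

definition in_GU :: "int \<Rightarrow> int \<Rightarrow> m2 \<Rightarrow> bool" where
  "in_GU a b g \<longleftrightarrow> (\<exists>\<mu>::rat. \<mu> \<noteq> 0 \<and> mmul a b g (mstar g) = mscal \<mu>)"

definition in_SU :: "int \<Rightarrow> int \<Rightarrow> m2 \<Rightarrow> bool" where
  "in_SU a b g \<longleftrightarrow> mmul a b g (mstar g) = mid"

text \<open>Row vectors in D^2 acted on from the right.\<close>
fun vecmat :: "int \<Rightarrow> int \<Rightarrow> quat \<times> quat \<Rightarrow> m2 \<Rightarrow> quat \<times> quat" where
  "vecmat a b (x, y) (M2 m11 m12 m21 m22) =
     (qadd (qmul a b x m11) (qmul a b y m21), qadd (qmul a b x m12) (qmul a b y m22))"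

definition lattice :: "int \<Rightarrow> int \<Rightarrow> quat set \<Rightarrow> m2 \<Rightarrow> (quat \<times> quat) set" where
  "lattice a b \<O> g = {vecmat a b (x, y) g | x y. x \<in> \<O> \<and> y \<in> \<O>}"

definition Gamma2 :: "int \<Rightarrow> int \<Rightarrow> quat set \<Rightarrow> m2 \<Rightarrow> m2 set" where
  "Gamma2 a b \<O> g = {\<gamma>. in_GU a b \<gamma> \<and> (\<lambda>v. vecmat a b v \<gamma>) ` lattice a b \<O> g = lattice a b \<O> g}"

text \<open>x lies in p^N O_p (tested inside D: x in p^N O_(p), O_(p) the localisation of \<O> at p).\<close>
definition qsmall :: "quat set \<Rightarrow> int \<Rightarrow> nat \<Rightarrow> quat \<Rightarrow> bool" where
  "qsmall \<O> p N x \<longleftrightarrow> (\<exists>m::int. \<not> p dvd m \<and> qsmul (of_int m / of_int p ^ N) x \<in> \<O>)"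

definition msmall :: "quat set \<Rightarrow> int \<Rightarrow> nat \<Rightarrow> m2 \<Rightarrow> bool" where
  "msmall \<O> p N M \<longleftrightarrow> (\<forall>x\<in>mentries M. qsmall \<O> p N x)"

definition mtendsto0 :: "quat set \<Rightarrow> int \<Rightarrow> (nat \<Rightarrow> m2) \<Rightarrow> bool" where
  "mtendsto0 \<O> p s \<longleftrightarrow> (\<forall>N. \<exists>n0. \<forall>n\<ge>n0. msmall \<O> p N (s n))"

definition mcauchy :: "quat set \<Rightarrow> int \<Rightarrow> (nat \<Rightarrow> m2) \<Rightarrow> bool" where
  "mcauchy \<O> p s \<longleftrightarrow> (\<forall>N. \<exists>n0. \<forall>m\<ge>n0. \<forall>n\<ge>n0. msmall \<O> p N (msub (s m) (s n)))"

text \<open>(\<O>^2 g)_p is locally equivalent to O_p^2, i.e. (\<O>^2 g)_p = O_p^2 h for some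
  h in GU_2(D_p).  Since (\<O>^2 g)_p = O_p^2 g, this means h = K g with K in GL_2(O_p) and
  K g (K g)^* = mu I with mu in Q_p^x = p^Z Z_p^x.  K (and its inverse K') are given as
  p-adic limits of matrices over \<O>, mu = p^e u with u a p-adic limit of p-adic units.\<close>
definition locally_equiv_O2_at :: "int \<Rightarrow> int \<Rightarrow> quat set \<Rightarrow> int \<Rightarrow> m2 \<Rightarrow> bool" where
  "locally_equiv_O2_at a b \<O> p g \<longleftrightarrow>
     (\<exists>(k :: nat \<Rightarrow> m2) (k' :: nat \<Rightarrow> m2) (e :: int) (u :: nat \<Rightarrow> int).
        (\<forall>n. mentries (k n) \<subseteq> \<O> \<and> mentries (k' n) \<subseteq> \<O> \<and> \<not> p dvd u n) \<and>
        mcauchy \<O> p k \<and> mcauchy \<O> p k' \<and> int_cauchy p u \<and>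
        mtendsto0 \<O> p (\<lambda>n. msub (mmul a b (k n) (k' n)) mid) \<and>
        mtendsto0 \<O> p (\<lambda>n. msub (mmul a b (k' n) (k n)) mid) \<and>
        mtendsto0 \<O> p (\<lambda>n. msub (mmul a b (mmul a b (k n) (mmul a b g (mstar g))) (mstar (k n)))
                                 (mscal ((of_int p :: rat) powi e * of_int (u n)))))"

definition nonprincipal_genus :: "int \<Rightarrow> int \<Rightarrow> quat set \<Rightarrow> int \<Rightarrow> m2 \<Rightarrow> bool" where
  "nonprincipal_genus a b \<O> p g \<longleftrightarrow> \<not> locally_equiv_O2_at a b \<O> p g"

end

theory Submission
  imports Defs
begin


lemma qadd_comm: "qadd x y = qadd y x"
  by (cases x; cases y) simp
lemma qadd_assoc: "qadd (qadd x y) z = qadd x (qadd y z)"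
  by (cases x; cases y; cases z) simp
lemma qadd_lc: "qadd x (qadd y z) = qadd y (qadd x z)"
  by (cases x; cases y; cases z) simp
lemmas qadd_ac = qadd_assoc qadd_comm qadd_lc

lemma qmul_assoc: "qmul a b (qmul a b x y) z = qmul a b x (qmul a b y z)"
  by (cases x; cases y; cases z) (simp add: Let_def algebra_simps)
lemma qmul_distL: "qmul a b x (qadd y z) = qadd (qmul a b x y) (qmul a b x z)"
  by (cases x; cases y; cases z) (simp add: Let_def algebra_simps)
lemma qmul_distR: "qmul a b (qadd y z) x = qadd (qmul a b y x) (qmul a b z x)"
  by (cases x; cases y; cases z) (simp add: Let_def algebra_simps)
lemma qmul_one1[simp]: "qmul a b qone x = x" by (cases x) (simp add: qone_def qrat_def)
lemma qmul_one2[simp]: "qmul a b x qone = x" by (cases x) (simp add: qone_def qrat_def)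
lemma qmul_zero1[simp]: "qmul a b qzero x = qzero" by (cases x) (simp add: qzero_def qrat_def)
lemma qmul_zero2[simp]: "qmul a b x qzero = qzero" by (cases x) (simp add: qzero_def qrat_def)
lemma qadd_zero1[simp]: "qadd qzero x = x" by (cases x) (simp add: qzero_def qrat_def)
lemma qadd_zero2[simp]: "qadd x qzero = x" by (cases x) (simp add: qzero_def qrat_def)

lemma mid_eq: "mid = M2 qone qzero qzero qone"
  by (simp add: mid_def mscal_def qone_def)

lemma vecmat_assoc: "vecmat a b (vecmat a b v A) B = vecmat a b v (mmul a b A B)"
  by (cases v; cases A; cases B) (simp add: qmul_distL qmul_distR qmul_assoc qadd_ac)

lemma mmul_assoc: "mmul a b (mmul a b A B) C = mmul a b A (mmul a b B C)"
  by (cases A; cases B; cases C) (simp add: qmul_distL qmul_distR qmul_assoc qadd_ac)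

lemma vecmat_mid[simp]: "vecmat a b v mid = v"
  by (cases v) (simp add: mid_eq)

lemma row1: "vecmat a b (qone, qzero) (M2 k11 k12 k21 k22) = (k11, k12)" by simp
lemma row2: "vecmat a b (qzero, qone) (M2 k11 k12 k21 k22) = (k21, k22)" by simp

lemma rows_ext:
  assumes "vecmat a b (qone, qzero) M = vecmat a b (qone, qzero) N"
      and "vecmat a b (qzero, qone) M = vecmat a b (qzero, qone) N"
  shows "M = N"
  using assms by (cases M; cases N) simp



lemma qlin4_add: "qadd (qlin4 c e) (qlin4 d e) = qlin4 (\<lambda>i. c i + d i) e"
proof -
  have s: "qadd (qsmul c x) (qsmul d x) = qsmul (c + d) x" for c d x
    by (cases x) (simp add: algebra_simps)
  show ?thesis unfolding qlin4_def
    by (simp add: s[symmetric] qadd_ac)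
qed

lemma qlin4_zero: "qlin4 (\<lambda>i. 0) e = qzero"
proof -
  have "qsmul 0 x = qzero" for x by (cases x) (simp add: qzero_def qrat_def)
  then show ?thesis unfolding qlin4_def by simp
qed

context
  fixes a b :: int and R :: "quat set"
  assumes ord: "is_order a b R"
begin

lemma O_one: "qone \<in> R" using ord by (simp add: is_order_def)
lemma O_mul: "x \<in> R \<Longrightarrow> y \<in> R \<Longrightarrow> qmul a b x y \<in> R" using ord by (simp add: is_order_def)
lemma O_add: assumes "x \<in> R" "y \<in> R" shows "qadd x y \<in> R"
proof -
  obtain e where e: "R = {qlin4 (\<lambda>i. of_int (n i)) e | n. True}" using ord by (auto simp: is_order_def)
  obtain n m where "x = qlin4 (\<lambda>i. of_int (n i)) e" "y = qlin4 (\<lambda>i. of_int (m i)) e"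
    using assms e by auto
  then have "qadd x y = qlin4 (\<lambda>i. of_int ((\<lambda>i. n i + m i) i)) e" by (simp add: qlin4_add)
  then show ?thesis unfolding e by (intro CollectI exI[of _ "\<lambda>i. n i + m i"]) simp
qed
lemma O_zero: "qzero \<in> R"
proof -
  obtain e where e: "R = {qlin4 (\<lambda>i. of_int (n i)) e | n. True}" using ord by (auto simp: is_order_def)
  have "qzero = qlin4 (\<lambda>i. of_int ((\<lambda>i. 0) i)) e" by (simp add: qlin4_zero)
  then show ?thesis unfolding e by (intro CollectI exI[of _ "\<lambda>i. 0"]) simp
qed

lemma vecmat_O:
  assumes "x \<in> R" "y \<in> R" "mentries k \<subseteq> R"
  shows "vecmat a b (x, y) k \<in> R \<times> R"
  using assms by (cases k) (auto intro!: O_add O_mul)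

lemma mentries_from_rows:
  assumes "\<forall>x\<in>R. \<forall>y\<in>R. vecmat a b (x, y) k \<in> R \<times> R"
  shows "mentries k \<subseteq> R"
proof (cases k)
  case (M2 k11 k12 k21 k22)
  have "vecmat a b (qone, qzero) k \<in> R \<times> R" "vecmat a b (qzero, qone) k \<in> R \<times> R"
    using assms O_one O_zero by auto
  then show ?thesis using M2 by simp
qed

end

lemma lattice_mem: "v \<in> lattice a b R g \<longleftrightarrow> (\<exists>x y. v = vecmat a b (x, y) g \<and> x \<in> R \<and> y \<in> R)"
  by (auto simp: lattice_def)



fun qI :: "quat \<Rightarrow> bool" where
  "qI (Quat x0 x1 x2 x3) \<longleftrightarrow> x0 \<in> \<int> \<and> x1 \<in> \<int> \<and> x2 \<in> \<int> \<and> x3 \<in> \<int>"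

definition qn :: "int \<Rightarrow> int \<Rightarrow> quat \<Rightarrow> rat" where
 "qn a b x = (case x of Quat x0 x1 x2 x3 \<Rightarrow> x0^2 - of_int a * x1^2 - of_int b * x2^2 + of_int a * of_int b * x3^2)"

fun qQ :: "int \<Rightarrow> int \<Rightarrow> quat \<times> quat \<Rightarrow> rat" where
  "qQ a b (x, y) = qn a b x + qn a b y"

lemma qI_add: "qI x \<Longrightarrow> qI y \<Longrightarrow> qI (qadd x y)"
  by (cases x; cases y) auto
lemma qI_mul: "qI x \<Longrightarrow> qI y \<Longrightarrow> qI (qmul a b x y)"
  by (cases x; cases y) (auto simp: Let_def intro!: Ints_add Ints_mult Ints_diff)
lemma qI_smul: "qI x \<Longrightarrow> qI (qsmul (of_int n) x)"
  by (cases x) (auto intro!: Ints_mult)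
lemma qsmul_qadd: "qsmul c (qadd x y) = qadd (qsmul c x) (qsmul c y)"
  by (cases x; cases y) (simp add: algebra_simps)
lemma qsmul_qsmul: "qsmul c (qsmul d x) = qsmul (c*d) x"
  by (cases x) (simp add: algebra_simps)
lemma qsmul_qmul: "qsmul (c*d) (qmul a b x y) = qmul a b (qsmul c x) (qsmul d y)"
  by (cases x; cases y) (simp add: Let_def algebra_simps)
lemma qn_smul: "qn a b (qsmul c x) = c^2 * qn a b x"
  by (cases x) (simp add: qn_def algebra_simps power2_eq_square)
lemma qn_int: "qI x \<Longrightarrow> qn a b x \<in> \<int>"
  by (cases x) (auto simp: qn_def intro!: Ints_add Ints_mult Ints_diff Ints_power)

lemma den_rat: "\<exists>d::int. d > 0 \<and> of_int d * (r::rat) \<in> \<int>"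
proof -
  obtain n d where q: "quotient_of r = (n, d)" by (cases "quotient_of r")
  have "d > 0" using quotient_of_denom_pos[OF q] .
  moreover have "of_int d * r = of_int n" using quotient_of_div[OF q] \<open>d > 0\<close> by simp
  ultimately show ?thesis by (intro exI[of _ d]) auto
qed

lemma den_mult_rat: "of_int d * r \<in> \<int> \<Longrightarrow> of_int (d*k) * (r::rat) \<in> \<int>"
proof -
  assume "of_int d * r \<in> \<int>"
  then have "of_int k * (of_int d * r) \<in> \<int>" by (rule Ints_mult[OF Ints_of_int])
  moreover have "of_int (d*k) * r = of_int k * (of_int d * r)" by simp
  ultimately show ?thesis by metis
qed

lemma den_quat: "\<exists>d::int. d > 0 \<and> qI (qsmul (of_int d) x)"
proof (cases x)
  case (Quat x0 x1 x2 x3)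
  obtain d0 d1 d2 d3 :: int where "d0 > 0" "of_int d0 * x0 \<in> \<int>" "d1 > 0" "of_int d1 * x1 \<in> \<int>"
    "d2 > 0" "of_int d2 * x2 \<in> \<int>" "d3 > 0" "of_int d3 * x3 \<in> \<int>"
    using den_rat by meson
  then have "of_int (d0*(d1*d2*d3)) * x0 \<in> \<int>" "of_int (d1*(d0*d2*d3)) * x1 \<in> \<int>"
     "of_int (d2*(d0*d1*d3)) * x2 \<in> \<int>" "of_int (d3*(d0*d1*d2)) * x3 \<in> \<int>"
    using den_mult_rat by blast+
  then have "qI (qsmul (of_int (d0*d1*d2*d3)) x)" using Quat by (simp add: mult_ac)
  then show ?thesis using \<open>d0>0\<close> \<open>d1>0\<close> \<open>d2>0\<close> \<open>d3>0\<close> by (intro exI[of _ "d0*d1*d2*d3"]) simp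
qed

lemma den_mult: "qI (qsmul (of_int d) x) \<Longrightarrow> qI (qsmul (of_int (d*k)) x)"
proof -
  assume "qI (qsmul (of_int d) x)"
  then have "qI (qsmul (of_int k) (qsmul (of_int d) x))" by (rule qI_smul)
  then show ?thesis by (simp add: qsmul_qsmul mult_ac)
qed

lemma den_list: "\<exists>d::int. d > 0 \<and> (\<forall>x\<in>set xs. qI (qsmul (of_int d) x))"
proof (induction xs)
  case Nil then show ?case by (intro exI[of _ 1]) simp
next
  case (Cons y xs)
  then obtain d where d: "d > 0" "\<forall>x\<in>set xs. qI (qsmul (of_int d) x)" by blast
  obtain d' where d': "d' > 0" "qI (qsmul (of_int d') y)" using den_quat by blast
  have "\<forall>x\<in>set (y#xs). qI (qsmul (of_int (d*d')) x)"
    using d d' den_mult[of d' y d] den_mult[of d _ d'] by (auto simp: mult_ac)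
  then show ?case using d d' by (intro exI[of _ "d*d'"]) simp
qed

lemma d4: "(of_int (d^4)::rat) * qn a b z = qn a b (qsmul (of_int (d*d)) z)"
proof -
  have "(of_int (d^4)::rat) = (of_int (d*d))^2" by (simp add: power2_eq_square power4_eq_xxxx)
  then show ?thesis by (simp add: qn_smul)
qed

lemma lattice_den:
  assumes ord: "is_order a b R"
  shows "\<exists>D::int. D > 0 \<and> (\<forall>v\<in>lattice a b R g. of_int D * qQ a b v \<in> \<int>)"
proof -
  obtain e where e: "R = {qlin4 (\<lambda>i. of_int (n i)) e | n. True}" using ord by (auto simp: is_order_def)
  obtain g11 g12 g21 g22 where g: "g = M2 g11 g12 g21 g22" by (cases g)
  have "\<exists>d::int. d > 0 \<and> (\<forall>x\<in>set [e 0, e 1, e 2, e 3, g11, g12, g21, g22]. qI (qsmul (of_int d) x))"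
    by (rule den_list)
  then obtain d where dd: "d > 0 \<and> (\<forall>x\<in>set [e 0, e 1, e 2, e 3, g11, g12, g21, g22]. qI (qsmul (of_int d) x))"
    by (rule exE)
  note d = conjunct1[OF dd] conjunct2[OF dd]
  have R: "qI (qsmul (of_int d) x)" if "x \<in> R" for x
  proof -
    obtain n where x: "x = qlin4 (\<lambda>i. of_int (n i)) e" using \<open>x\<in>R\<close> e by auto
    have sw: "qsmul (of_int d) (qsmul (of_int m) y) = qsmul (of_int m) (qsmul (of_int d) y)" for m y
      by (simp add: qsmul_qsmul mult_ac)
    have E: "qI (qsmul (of_int d) (e 0))" "qI (qsmul (of_int d) (e 1))"
            "qI (qsmul (of_int d) (e 2))" "qI (qsmul (of_int d) (e 3))" using d(2) by simp_all
    show ?thesis unfolding x qlin4_def qsmul_qadd sw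
      by (intro qI_add qI_smul[OF E(1)] qI_smul[OF E(2)] qI_smul[OF E(3)] qI_smul[OF E(4)])
  qed
  have "of_int (d^4) * qQ a b v \<in> \<int>" if vL: "v \<in> lattice a b R g" for v
  proof -
    obtain x y where v: "v = vecmat a b (x, y) g" "x \<in> R" "y \<in> R" using vL[unfolded lattice_mem] by blast
    have c: "qI (qsmul (of_int (d*d)) (qadd (qmul a b x u) (qmul a b y w)))"
      if "qI (qsmul (of_int d) u)" "qI (qsmul (of_int d) w)" for u w
    proof -
      have eq: "qsmul (of_int (d*d)) (qadd (qmul a b x u) (qmul a b y w)) =
            qadd (qmul a b (qsmul (of_int d) x) (qsmul (of_int d) u)) (qmul a b (qsmul (of_int d) y) (qsmul (of_int d) w))"
        by (simp only: qsmul_qadd of_int_mult qsmul_qmul)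
      have xy: "qI (qsmul (of_int d) x)" "qI (qsmul (of_int d) y)" using R v(2,3) by blast+
      show ?thesis unfolding eq by (intro qI_add qI_mul xy that)
    qed
    have n: "of_int (d^4) * qn a b z \<in> \<int>" if "qI (qsmul (of_int (d*d)) z)" for z
      unfolding d4 using qn_int that by blast
    have "qI (qsmul (of_int (d*d)) (qadd (qmul a b x g11) (qmul a b y g21)))"
         "qI (qsmul (of_int (d*d)) (qadd (qmul a b x g12) (qmul a b y g22)))"
      using c d(2) by auto
    then have "of_int (d^4) * qn a b (qadd (qmul a b x g11) (qmul a b y g21)) \<in> \<int>"
       "of_int (d^4) * qn a b (qadd (qmul a b x g12) (qmul a b y g22)) \<in> \<int>" using n by blast+
    moreover have "qQ a b v = qn a b (qadd (qmul a b x g11) (qmul a b y g21)) + qn a b (qadd (qmul a b x g12) (qmul a b y g22))"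
      using v g by simp
    ultimately show ?thesis by (simp only: distrib_left Ints_add)
  qed
  then show ?thesis using d by (intro exI[of _ "d^4"]) auto
qed

lemma ram_inf_neg: assumes "ram_inf a b" "a \<noteq> 0" "b \<noteq> 0" shows "a < 0" "b < 0"
proof -
  show "a < 0"
  proof (rule ccontr)
    assume "\<not> a < 0" then have "a > 0" using assms by simp
    have "(sqrt (of_int a)::real)^2 - of_int a * 1^2 - of_int b * 0^2 + of_int a * of_int b * 0^2 = 0"
      using \<open>a>0\<close> by simp
    then show False using assms(1) unfolding ram_inf_def
      by (metis one_neq_zero prod.inject)
  qed
  show "b < 0"
  proof (rule ccontr)
    assume "\<not> b < 0" then have "b > 0" using assms by simp
    have "(sqrt (of_int b)::real)^2 - of_int a * 0^2 - of_int b * 1^2 + of_int a * of_int b * 0^2 = 0"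
      using \<open>b>0\<close> by simp
    then show False using assms(1) unfolding ram_inf_def
      by (metis one_neq_zero prod.inject)
  qed
qed

lemma qn_nonneg: assumes "a < 0" "b < 0" shows "qn a b x \<ge> 0"
proof (cases x)
  case (Quat x0 x1 x2 x3)
  define A where "A = (- of_int a::rat)"
  define B where "B = (- of_int b::rat)"
  have AB: "A > 0" "B > 0" using assms by (auto simp: A_def B_def)
  have h: "qn a b x = x0^2 + A * x1^2 + B * x2^2 + (A * B) * x3^2"
    using Quat by (simp add: qn_def A_def B_def)
  have t: "x0^2 \<ge> 0" "A * x1^2 \<ge> 0" "B * x2^2 \<ge> 0" "(A*B) * x3^2 \<ge> 0"
    using AB by auto
  show ?thesis unfolding h using t by linarith
qed

lemma qn_pos: assumes "a < 0" "b < 0" "x \<noteq> qzero" shows "qn a b x > 0"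
proof (cases x)
  case (Quat x0 x1 x2 x3)
  define A where "A = (- of_int a::rat)"
  define B where "B = (- of_int b::rat)"
  have AB: "A > 0" "B > 0" using assms by (auto simp: A_def B_def)
  have h: "qn a b x = x0^2 + A * x1^2 + B * x2^2 + (A * B) * x3^2"
    using Quat by (simp add: qn_def A_def B_def)
  have t: "x0^2 \<ge> 0" "A * x1^2 \<ge> 0" "B * x2^2 \<ge> 0" "(A*B) * x3^2 \<ge> 0"
    using AB by auto
  show ?thesis
  proof (rule ccontr)
    assume "\<not> ?thesis"
    then have "x0^2 = 0" "A * x1^2 = 0" "B * x2^2 = 0" "(A*B) * x3^2 = 0"
      unfolding h using t by linarith+
    then have "x0 = 0" "x1 = 0" "x2 = 0" "x3 = 0" using AB by auto
    then show False using assms Quat by (simp add: qzero_def qrat_def)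
  qed
qed



fun qsc :: "quat \<Rightarrow> rat" where "qsc (Quat x0 x1 x2 x3) = x0"

lemma vq: "qn a b (qadd (qmul a b x g11) (qmul a b y g21)) + qn a b (qadd (qmul a b x g12) (qmul a b y g22))
  = qsc (qadd (qadd (qmul a b (qmul a b x (qadd (qmul a b g11 (qconj g11)) (qmul a b g12 (qconj g12)))) (qconj x))
                    (qmul a b (qmul a b x (qadd (qmul a b g11 (qconj g21)) (qmul a b g12 (qconj g22)))) (qconj y)))
              (qadd (qmul a b (qmul a b y (qadd (qmul a b g21 (qconj g11)) (qmul a b g22 (qconj g12)))) (qconj x))
                    (qmul a b (qmul a b y (qadd (qmul a b g21 (qconj g21)) (qmul a b g22 (qconj g22)))) (qconj y))))"
  by (cases x; cases y; cases g11; cases g12; cases g21; cases g22) (simp add: qn_def Let_def algebra_simps power2_eq_square)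

lemma vq2: "qsc (qadd (qadd (qmul a b (qmul a b x (qrat m)) (qconj x))
                    (qmul a b (qmul a b x qzero) (qconj y)))
              (qadd (qmul a b (qmul a b y qzero) (qconj x))
                    (qmul a b (qmul a b y (qrat m)) (qconj y)))) = m * (qn a b x + qn a b y)"
  by (cases x; cases y) (simp add: qn_def qrat_def qzero_def Let_def algebra_simps power2_eq_square)

lemma qQ_vecmat:
  assumes "mmul a b G (mstar G) = mscal m"
  shows "qQ a b (vecmat a b v G) = m * qQ a b v"
proof -
  obtain x y where v: "v = (x, y)" by (cases v)
  obtain g11 g12 g21 g22 where G: "G = M2 g11 g12 g21 g22" by (cases G)
  have e: "qadd (qmul a b g11 (qconj g11)) (qmul a b g12 (qconj g12)) = qrat m"
          "qadd (qmul a b g11 (qconj g21)) (qmul a b g12 (qconj g22)) = qzero"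
          "qadd (qmul a b g21 (qconj g11)) (qmul a b g22 (qconj g12)) = qzero"
          "qadd (qmul a b g21 (qconj g21)) (qmul a b g22 (qconj g22)) = qrat m"
    using assms G by (simp_all add: mscal_def)
  show ?thesis using v G vq[of a b x g11 y g21 g12 g22] vq2[of a b x m y] by (simp add: e)
qed

lemma bern: "(0::rat) \<le> t \<Longrightarrow> 1 + of_nat n * t \<le> (1 + t) ^ n"
proof (induction n)
  case 0 then show ?case by simp
next
  case (Suc n)
  have "1 + of_nat (Suc n) * t \<le> (1 + of_nat n * t) * (1 + t)"
    using Suc.prems by (simp add: algebra_simps)
  also have "\<dots> \<le> (1 + t) ^ n * (1 + t)"
    using Suc by (intro mult_right_mono) auto
  finally show ?case by (simp add: mult.commute)
qed

lemma no_growth: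
  fixes nu q c :: rat
  assumes "nu > 1" "c > 0" "\<forall>n. q \<ge> c * nu ^ n"
  shows False
proof -
  define t where "t = nu - 1"
  have t: "t > 0" using assms t_def by simp
  obtain n :: nat where n: "q / (c * t) < of_nat n" using reals_Archimedean2 by blast
  have "c * (1 + of_nat n * t) \<le> c * nu ^ n"
    using bern[of t n] t assms(2) t_def by (intro mult_left_mono) auto
  also have "\<dots> \<le> q" using assms(3) by blast
  finally have "c * of_nat n * t < q + 0" using assms(2) t by (simp add: algebra_simps)
  moreover have "q < of_nat n * (c * t)" using n assms(2) t by (simp add: divide_less_eq mult_pos_pos)
  ultimately show False by (simp add: algebra_simps)
qed

lemma int_pos_ge1: "(r::rat) \<in> \<int> \<Longrightarrow> r > 0 \<Longrightarrow> r \<ge> 1"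
  by (elim Ints_cases) simp

lemma vecmat_zero: "vecmat a b (qzero, qzero) G = (qzero, qzero)"
  by (cases G) simp


lemma mmul_mid1: "mmul a b (M2 qone qzero qzero qone) X = X" by (cases X) simp
lemma mmul_mid2: "mmul a b X (M2 qone qzero qzero qone) = X" by (cases X) simp


theorem theorem5p1:
  fixes a b p :: int and \<O> :: "quat set" and g :: m2
  assumes "prime p"
    and "ramified_exactly_p_inf a b p"
    and "is_max_order a b \<O>"
    and "in_GL2 a b g"
    and "nonprincipal_genus a b \<O> p g"
  shows "Gamma2 a b \<O> g =
           {\<gamma>. in_SU a b \<gamma> \<and> (\<exists>k. in_GL2O a b \<O> k \<and> mmul a b g \<gamma> = mmul a b k g)}"
proof -
  have ord: "is_order a b \<O>" using assms(3) by (simp add: is_max_order_def)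
  have ab: "a < 0" "b < 0" using assms(2) ram_inf_neg by (auto simp: ramified_exactly_p_inf_def)
  obtain h where gh: "mmul a b g h = mid" and hg: "mmul a b h g = mid"
    using assms(4) by (auto simp: in_GL2_def)
  define L where "L = lattice a b \<O> g"
  have Lmem: "v \<in> L \<longleftrightarrow> (\<exists>x y. v = vecmat a b (x, y) g \<and> x \<in> \<O> \<and> y \<in> \<O>)" for v
    unfolding L_def by (rule lattice_mem)
  have bk: "vecmat a b (vecmat a b (x, y) g) h = (x, y)" for x y
    by (simp add: vecmat_assoc gh)
  have bk2: "vecmat a b (vecmat a b u h) g = u" for u
    by (simp add: vecmat_assoc hg)
  have one: "qone \<in> \<O>" "qzero \<in> \<O>" using O_one[OF ord] O_zero[OF ord] .
  show ?thesis
  proof (intro set_eqI iffI)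
    fix \<gamma> assume "\<gamma> \<in> Gamma2 a b \<O> g"
    then obtain \<mu> where mu0: "\<mu> \<noteq> 0" and hmu: "mmul a b \<gamma> (mstar \<gamma>) = mscal \<mu>"
      and img: "(\<lambda>v. vecmat a b v \<gamma>) ` L = L"
      by (auto simp: Gamma2_def in_GU_def L_def)
    have fwd: "vecmat a b v \<gamma> \<in> L" if "v \<in> L" for v using img that by blast
    have bwd: "\<exists>w\<in>L. vecmat a b w \<gamma> = v" if "v \<in> L" for v
      using that img by (metis imageE)
    obtain D :: int where D: "D > 0" "\<forall>v\<in>L. of_int D * qQ a b v \<in> \<int>"
      using lattice_den[OF ord, of g] unfolding L_def by blast
    have lowb: "qQ a b v \<ge> 1 / of_int D" if "v \<in> L" "qQ a b v > 0" for v
    proof -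
      have "of_int D * qQ a b v \<ge> 1" using D that by (intro int_pos_ge1) auto
      then show ?thesis using D(1) by (simp add: divide_le_eq mult.commute)
    qed
    define v0 where "v0 = vecmat a b (qone, qzero) g"
    have v0L: "v0 \<in> L" unfolding v0_def Lmem using one by blast
    have q0: "qQ a b v0 > 0"
    proof -
      obtain x y where xy: "v0 = (x, y)" by (cases v0)
      have "v0 \<noteq> (qzero, qzero)"
      proof
        assume "v0 = (qzero, qzero)"
        then have "vecmat a b v0 h = (qzero, qzero)" by (simp add: vecmat_zero)
        moreover have "vecmat a b v0 h = (qone, qzero)" unfolding v0_def by (rule bk)
        ultimately show False by (simp add: qone_def qzero_def qrat_def)
      qed
      then have "x \<noteq> qzero \<or> y \<noteq> qzero" using xy by auto
      then show ?thesis using xy qn_nonneg[OF ab] qn_pos[OF ab]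
        by (auto intro: add_pos_nonneg add_nonneg_pos)
    qed
    have qnn: "qQ a b v \<ge> 0" for v
      by (cases v) (simp add: qn_nonneg[OF ab])
    have mupos: "\<mu> > 0"
    proof -
      have "\<mu> * qQ a b v0 \<ge> 0" using qnn qQ_vecmat[OF hmu, of v0] by metis
      then have "\<mu> \<ge> 0" using q0 by (simp add: zero_le_mult_iff)
      then show ?thesis using mu0 by simp
    qed
    have up: "\<exists>v\<in>L. qQ a b v = \<mu> ^ n * qQ a b v0" for n
    proof (induction n)
      case 0 then show ?case using v0L by auto
    next
      case (Suc n)
      then obtain v where "v \<in> L" "qQ a b v = \<mu> ^ n * qQ a b v0" by blast
      then show ?case using fwd qQ_vecmat[OF hmu, of v] by (intro bexI[of _ "vecmat a b v \<gamma>"]) auto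
    qed
    have down: "\<exists>v\<in>L. \<mu> ^ n * qQ a b v = qQ a b v0" for n
    proof (induction n)
      case 0 then show ?case using v0L by auto
    next
      case (Suc n)
      then obtain v where v: "v \<in> L" "\<mu> ^ n * qQ a b v = qQ a b v0" by blast
      then obtain w where w: "w \<in> L" "vecmat a b w \<gamma> = v" using bwd by blast
      have "\<mu> ^ Suc n * qQ a b w = \<mu> ^ n * qQ a b v"
        using qQ_vecmat[OF hmu, of w] w by simp
      then show ?case using v w by auto
    qed
    have c0: "(1 / of_int D :: rat) > 0" using D by simp
    have mu1: "\<mu> = 1"
    proof (rule ccontr)
      assume "\<mu> \<noteq> 1"
      then consider "\<mu> > 1" | "\<mu> < 1" by linarith
      then show False
      proof cases
        case 1
        have "\<forall>n. qQ a b v0 \<ge> (1 / of_int D) * \<mu> ^ n"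
        proof
          fix n
          obtain v where v: "v \<in> L" "\<mu> ^ n * qQ a b v = qQ a b v0" using down by blast
          have "qQ a b v > 0" using v q0 mupos by (metis zero_less_mult_pos zero_less_power)
          then have "qQ a b v \<ge> 1 / of_int D" using lowb v by blast
          then have "\<mu> ^ n * (1 / of_int D) \<le> \<mu> ^ n * qQ a b v" using mupos by (intro mult_left_mono) auto
          then show "qQ a b v0 \<ge> (1 / of_int D) * \<mu> ^ n" using v by (simp add: mult.commute)
        qed
        then show False using no_growth[OF 1 c0] by blast
      next
        case 2
        have nu: "1 / \<mu> > 1" using 2 mupos by simp
        have "\<forall>n. qQ a b v0 \<ge> (1 / of_int D) * (1 / \<mu>) ^ n"
        proof
          fix n
          obtain v where v: "v \<in> L" "qQ a b v = \<mu> ^ n * qQ a b v0" using up by blast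
          have "qQ a b v > 0" using v q0 mupos by simp
          then have "qQ a b v \<ge> 1 / of_int D" using lowb v by blast
          then have "(1 / \<mu>) ^ n * (1 / of_int D) \<le> (1 / \<mu>) ^ n * qQ a b v" using mupos by (intro mult_left_mono) auto
          also have "\<dots> = qQ a b v0" using v mupos by (simp add: power_one_over)
          finally show "qQ a b v0 \<ge> (1 / of_int D) * (1 / \<mu>) ^ n" by (simp add: mult.commute)
        qed
        then show False using no_growth[OF nu c0] by blast
      qed
    qed
    have hI: "mmul a b \<gamma> (mstar \<gamma>) = mid" using hmu mu1 by (simp add: mid_def)
    define k where "k = mmul a b g (mmul a b \<gamma> h)"
    define k' where "k' = mmul a b g (mmul a b (mstar \<gamma>) h)"
    have fwd2: "vecmat a b v (mstar \<gamma>) \<in> L" if vL: "v \<in> L" for v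
    proof -
      obtain w where "w \<in> L" "vecmat a b w \<gamma> = v" using bwd vL by blast
      then show ?thesis using hI by (metis vecmat_assoc vecmat_mid)
    qed
    have inv2: "vecmat a b (vecmat a b v (mstar \<gamma>)) \<gamma> = v" if vL: "v \<in> L" for v
    proof -
      obtain w where "w \<in> L" "vecmat a b w \<gamma> = v" using bwd vL by blast
      then show ?thesis using hI by (metis vecmat_assoc vecmat_mid)
    qed
    have entries: "mentries (mmul a b g (mmul a b M h)) \<subseteq> \<O>" if "\<And>v. v \<in> L \<Longrightarrow> vecmat a b v M \<in> L" for M
    proof (rule mentries_from_rows[OF ord], intro ballI)
      fix x y assume "x \<in> \<O>" "y \<in> \<O>"
      then have "vecmat a b (x, y) g \<in> L" unfolding Lmem by blast
      then have "vecmat a b (vecmat a b (x, y) g) M \<in> L" using that by blast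
      then obtain x' y' where xy: "vecmat a b (vecmat a b (x, y) g) M = vecmat a b (x', y') g" "x' \<in> \<O>" "y' \<in> \<O>"
        unfolding Lmem by blast
      have "vecmat a b (x, y) (mmul a b g (mmul a b M h)) = vecmat a b (vecmat a b (vecmat a b (x, y) g) M) h"
        by (simp add: vecmat_assoc mmul_assoc)
      also have "\<dots> = (x', y')" using xy bk by simp
      finally show "vecmat a b (x, y) (mmul a b g (mmul a b M h)) \<in> \<O> \<times> \<O>" using xy by simp
    qed
    have hgX: "mmul a b h (mmul a b g X) = X" for X
      by (simp add: mmul_assoc[symmetric] hg mid_eq mmul_mid1)
    have ggX: "mmul a b \<gamma> (mmul a b (mstar \<gamma>) X) = X" for X
      by (simp add: mmul_assoc[symmetric] hI mid_eq mmul_mid1)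
    have kk': "mmul a b k k' = mid"
      by (simp add: k_def k'_def mmul_assoc hgX ggX gh)
    have k'k: "mmul a b k' k = mid"
    proof (rule rows_ext)
      have "vecmat a b u (mmul a b k' k) = u" if "fst u \<in> \<O>" "snd u \<in> \<O>" for u
      proof -
        obtain x y where u: "u = (x, y)" by (cases u)
        have uL: "vecmat a b u g \<in> L" using u that unfolding Lmem by auto
        have "vecmat a b u (mmul a b k' k) = vecmat a b (vecmat a b (vecmat a b (vecmat a b u g) (mstar \<gamma>)) \<gamma>) h"
          by (simp add: k_def k'_def vecmat_assoc mmul_assoc hgX)
        also have "\<dots> = u" using u bk inv2[OF uL] by simp
        finally show ?thesis .
      qed
      then show "vecmat a b (qone, qzero) (mmul a b k' k) = vecmat a b (qone, qzero) mid"
            "vecmat a b (qzero, qone) (mmul a b k' k) = vecmat a b (qzero, qone) mid"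
        using one by auto
    qed
    have kO: "in_GL2O a b \<O> k"
      unfolding in_GL2O_def
      using entries[of \<gamma>] entries[of "mstar \<gamma>"] fwd fwd2 kk' k'k
      unfolding k_def k'_def by blast
    have gk: "mmul a b g \<gamma> = mmul a b k g"
    proof (rule rows_ext)
      have "vecmat a b u (mmul a b k g) = vecmat a b u (mmul a b g \<gamma>)" for u
        by (simp add: k_def mmul_assoc hg mid_eq mmul_mid2)
      then show "vecmat a b (qone, qzero) (mmul a b g \<gamma>) = vecmat a b (qone, qzero) (mmul a b k g)"
            "vecmat a b (qzero, qone) (mmul a b g \<gamma>) = vecmat a b (qzero, qone) (mmul a b k g)"
        by auto
    qed
    show "\<gamma> \<in> {\<gamma>. in_SU a b \<gamma> \<and> (\<exists>k. in_GL2O a b \<O> k \<and> mmul a b g \<gamma> = mmul a b k g)}"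
      using hI kO gk by (auto simp: in_SU_def)
  next
    fix \<gamma> assume "\<gamma> \<in> {\<gamma>. in_SU a b \<gamma> \<and> (\<exists>k. in_GL2O a b \<O> k \<and> mmul a b g \<gamma> = mmul a b k g)}"
    then obtain k k' where hI: "mmul a b \<gamma> (mstar \<gamma>) = mid" and gk: "mmul a b g \<gamma> = mmul a b k g"
      and kE: "mentries k \<subseteq> \<O>" and k'E: "mentries k' \<subseteq> \<O>"
      and kk': "mmul a b k k' = mid" and k'k: "mmul a b k' k = mid"
      by (auto simp: in_SU_def in_GL2O_def)
    have GU: "in_GU a b \<gamma>" using hI by (auto simp: in_GU_def mid_def intro!: exI[of _ 1])
    have "(\<lambda>v. vecmat a b v \<gamma>) ` L = L"
    proof (intro set_eqI iffI)
      fix v assume "v \<in> (\<lambda>v. vecmat a b v \<gamma>) ` L"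
      then obtain u where u: "u \<in> L" "v = vecmat a b u \<gamma>" by blast
      then obtain x y where v0: "u = vecmat a b (x, y) g" "x \<in> \<O>" "y \<in> \<O>"
        using Lmem by blast
      have v: "v = vecmat a b (vecmat a b (x, y) g) \<gamma>" "x \<in> \<O>" "y \<in> \<O>" using u v0 by auto
      have "v = vecmat a b (vecmat a b (x, y) k) g" using v(1) gk by (simp add: vecmat_assoc mmul_assoc)
      moreover have "vecmat a b (x, y) k \<in> \<O> \<times> \<O>" using vecmat_O[OF ord v(2,3) kE] .
      ultimately show "v \<in> L" unfolding Lmem by (metis mem_Times_iff prod.collapse)
    next
      fix v assume "v \<in> L"
      then obtain x y where v: "v = vecmat a b (x, y) g" "x \<in> \<O>" "y \<in> \<O>" unfolding Lmem by blast
      define w where "w = vecmat a b (vecmat a b (x, y) k') g"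
      have "vecmat a b (x, y) k' \<in> \<O> \<times> \<O>" using vecmat_O[OF ord v(2,3) k'E] .
      then have wL: "w \<in> L" unfolding w_def Lmem by (metis mem_Times_iff prod.collapse)
      have "vecmat a b w \<gamma> = vecmat a b (vecmat a b (vecmat a b (x, y) k') k) g"
        unfolding w_def by (simp add: vecmat_assoc mmul_assoc gk)
      also have "\<dots> = v" using v by (simp add: vecmat_assoc k'k)
      finally show "v \<in> (\<lambda>v. vecmat a b v \<gamma>) ` L" using wL by (metis image_eqI)
    qed
    then show "\<gamma> \<in> Gamma2 a b \<O> g" using GU by (simp add: Gamma2_def L_def)
  qed
qed


end
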